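(* Let $X$ be a Banach space and let $A\subseteq \mathcal{B}(X)$ be a norm-closed subalgebra. Suppose that $A$ is bicontinuously isomorphic (as an algebra) to a quasi-directly finite $C^*$-algebra. Then $A$ is surjunctive, i.e. for every $a\in A$ the residual spectrum of $a$ is empty.
   Context: $\mathcal{B}(X)$ denotes the algebra of bounded linear operators on $X$. For $T\in\mathcal{B}(X)$, the residual spectrum of $T$ is the set of $\lambda\in\mathbb{C}$ such that $T-\lambda I$ is injective with closed range that is a proper subspace of $X$. A subalgebra $A\subseteq\mathcal{B}(X)$ is called surjunctive if every $a\in A$ has empty residual spectrum. For elements $a,b$ of a ring $R$ (not necessarily unital), put $a\diamond b := a+b-ab$; if $a\diamond b=0$, $a$ is called a left quasi-inverse of $b$ and $b$ a right quasi-inverse of $a$. A ring $R$ is quasi-directly finite if every element of $R$ which has a left quasi-inverse in $R$ also has a right quasi-inverse in $R$ (equivalently: whenever $a,b\in R$ satisfy $a\diamond b=0$, also $b\diamond a=0$). An algebra is quasi-directly finite if its underlying ring is. *)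

theory Defs
  imports "HOL-Analysis.Analysis"
begin

class complex_normed_vector = real_normed_vector +
  fixes cscale :: "complex \<Rightarrow> 'a \<Rightarrow> 'a"
  assumes cscale_add_right: "cscale c (x + y) = cscale c x + cscale c y"
    and cscale_add_left: "cscale (c + d) x = cscale c x + cscale d x"
    and cscale_cscale: "cscale c (cscale d x) = cscale (c * d) x"
    and cscale_one: "cscale 1 x = x"
    and scaleR_cscale: "scaleR r x = cscale (complex_of_real r) x"
    and norm_cscale: "norm (cscale c x) = cmod c * norm x"

class complex_banach = complex_normed_vector + banach

class cstar_algebra = complex_banach + real_normed_algebra +
  fixes cstar :: "'a \<Rightarrow> 'a"
  assumes mult_cscale_left: "cscale c x * y = cscale c (x * y)"
    and mult_cscale_right: "x * cscale c y = cscale c (x * y)"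
    and cstar_add: "cstar (x + y) = cstar x + cstar y"
    and cstar_cscale: "cstar (cscale c x) = cscale (cnj c) (cstar x)"
    and cstar_mult: "cstar (x * y) = cstar y * cstar x"
    and cstar_cstar: "cstar (cstar x) = x"
    and cstar_identity: "norm (cstar x * x) = (norm x)\<^sup>2"

definition qdiamond :: "'a::ring \<Rightarrow> 'a \<Rightarrow> 'a" where
  "qdiamond a b = a + b - a * b"

definition quasi_directly_finite :: "'a::ring itself \<Rightarrow> bool" where
  "quasi_directly_finite _ \<longleftrightarrow> (\<forall>a b :: 'a. qdiamond a b = 0 \<longrightarrow> qdiamond b a = 0)"

text \<open>\<open>B(X)\<close>: bounded complex-linear operators, as elements of the real blinfun space
  (whose norm is the operator norm) that commute with complex scalars.\<close>
definition BX :: "('a::complex_banach \<Rightarrow>\<^sub>L 'a) set" where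
  "BX = {T. \<forall>c x. blinfun_apply T (cscale c x) = cscale c (blinfun_apply T x)}"

definition subalgebra_BX :: "('a::complex_banach \<Rightarrow>\<^sub>L 'a) set \<Rightarrow> bool" where
  "subalgebra_BX A \<longleftrightarrow> A \<subseteq> BX \<and> 0 \<in> A
     \<and> (\<forall>S\<in>A. \<forall>T\<in>A. S + T \<in> A)
     \<and> (\<forall>S\<in>A. \<forall>T\<in>A. S o\<^sub>L T \<in> A)
     \<and> (\<forall>T\<in>A. \<forall>c. \<exists>S\<in>A. \<forall>x. blinfun_apply S x = cscale c (blinfun_apply T x))"

definition residual_spectrum :: "('a::complex_banach \<Rightarrow>\<^sub>L 'a) \<Rightarrow> complex set" where
  "residual_spectrum T =
     {l. inj (\<lambda>x. blinfun_apply T x - cscale l x)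
        \<and> closed (range (\<lambda>x. blinfun_apply T x - cscale l x))
        \<and> range (\<lambda>x. blinfun_apply T x - cscale l x) \<noteq> UNIV}"

definition surjunctive :: "('a::complex_banach \<Rightarrow>\<^sub>L 'a) set \<Rightarrow> bool" where
  "surjunctive A \<longleftrightarrow> (\<forall>a\<in>A. residual_spectrum a = {})"

definition bicont_alg_iso :: "('a::complex_banach \<Rightarrow>\<^sub>L 'a) set \<Rightarrow> (('a \<Rightarrow>\<^sub>L 'a) \<Rightarrow> 'b::cstar_algebra) \<Rightarrow> bool" where
  "bicont_alg_iso A \<phi> \<longleftrightarrow> bij_betw \<phi> A UNIV
     \<and> (\<forall>S\<in>A. \<forall>T\<in>A. \<phi> (S + T) = \<phi> S + \<phi> T)
     \<and> (\<forall>S\<in>A. \<forall>T\<in>A. \<phi> (S o\<^sub>L T) = \<phi> S * \<phi> T)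
     \<and> (\<forall>S\<in>A. \<forall>T\<in>A. \<forall>c. (\<forall>x. blinfun_apply S x = cscale c (blinfun_apply T x))
            \<longrightarrow> \<phi> S = cscale c (\<phi> T))
     \<and> continuous_on A \<phi> \<and> continuous_on UNIV (inv_into A \<phi>)"

end

theory Submission
  imports Defs
begin


context complex_normed_vector begin
lemma cscale_zero_right[simp]: "cscale c 0 = 0"
proof -
  have "cscale c 0 + cscale c 0 = cscale c 0 + 0" by (simp flip: cscale_add_right)
  then show ?thesis by (rule add_left_imp_eq)
qed
lemma cscale_minus_right: "cscale c (- x) = - cscale c x"
proof -
  have "cscale c (- x) + cscale c x = 0" by (simp flip: cscale_add_right)
  then show ?thesis by (simp add: eq_neg_iff_add_eq_0)
qed
lemma cscale_diff_right: "cscale c (x - y) = cscale c x - cscale c y"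
  by (simp only: diff_conv_add_uminus cscale_add_right cscale_minus_right)
lemma cscale_zero_left[simp]: "cscale 0 x = 0"
proof -
  have "cscale 0 x + cscale 0 x = cscale 0 x + 0" by (simp flip: cscale_add_left)
  then show ?thesis by (rule add_left_imp_eq)
qed
lemma cscale_minus_left: "cscale (- c) x = - cscale c x"
proof -
  have "cscale (- c) x + cscale c x = 0" by (simp flip: cscale_add_left)
  then show ?thesis by (simp add: eq_neg_iff_add_eq_0)
qed
lemma cscale_diff_left: "cscale (c - d) x = cscale c x - cscale d x"
  using cscale_add_left[of c "- d" x] by (simp add: cscale_minus_left)
lemma cscale_of_real: "cscale (complex_of_real r) x = scaleR r x"
  by (simp add: scaleR_cscale)
end

context cstar_algebra begin
lemma cstar_zero[simp]: "cstar 0 = 0"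
proof -
  have "cstar 0 + cstar 0 = cstar 0 + 0" by (simp flip: cstar_add)
  then show ?thesis by (rule add_left_imp_eq)
qed
lemma cstar_minus: "cstar (- x) = - cstar x"
proof -
  have "cstar (- x) + cstar x = 0" by (simp flip: cstar_add)
  then show ?thesis by (simp add: eq_neg_iff_add_eq_0)
qed
lemma cstar_diff: "cstar (x - y) = cstar x - cstar y"
  by (simp only: diff_conv_add_uminus cstar_add cstar_minus)
lemma cstar_scaleR: "cstar (scaleR r x) = scaleR r (cstar x)"
  by (simp add: scaleR_cscale cstar_cscale)

lemma norm_cstar_le: "norm x \<le> norm (cstar x)"
proof (cases "x = 0")
  case False
  have "(norm x)^2 \<le> norm (cstar x) * norm x"
    using cstar_identity[of x] norm_mult_ineq[of "cstar x" x] by simp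
  then show ?thesis using False by (simp add: power2_eq_square)
qed simp

lemma norm_cstar[simp]: "norm (cstar x) = norm x"
proof (rule antisym)
  show "norm (cstar x) \<le> norm x" using norm_cstar_le[of "cstar x"] by (simp add: cstar_cstar)
qed (rule norm_cstar_le)

end

lemma norm_selfadj_le:
  fixes a b :: "'a::cstar_algebra"
  assumes "cstar a = a" "cstar b = b"
  shows "norm a \<le> norm (a + cscale \<i> b)"
proof -
  let ?X = "a + cscale \<i> b"
  have "cstar ?X = a - cscale \<i> b"
    using assms by (simp add: cstar_add cstar_cscale cscale_minus_left)
  then have "?X + cstar ?X = a + a" by (simp add: algebra_simps)
  then have "norm (a + a) = norm (?X + cstar ?X)" by (simp only:)
  also have "\<dots> \<le> norm ?X + norm (cstar ?X)" by (rule norm_triangle_ineq)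
  finally have "norm (a + a) \<le> 2 * norm ?X" by simp
  moreover have "norm (a + a) = 2 * norm a"
  proof -
    have "a + a = scaleR 2 a" by (rule scaleR_2[symmetric])
    then show ?thesis by simp
  qed
  ultimately show ?thesis by simp
qed



lemmas [simp] = cstar_cstar

definition Aop :: "real \<Rightarrow> 'a::cstar_algebra \<Rightarrow> real \<Rightarrow> 'a \<Rightarrow> 'a" where
  "Aop p Q t z = cscale (complex_of_real p + \<i> * complex_of_real t) z + Q * z"

lemma Aop_diff: "Aop p Q t x - Aop p Q t y = Aop p Q t (x - y)"
  by (simp add: Aop_def cscale_diff_right right_diff_distrib)

lemma Aop_below:
  fixes Q :: "'a::cstar_algebra"
  assumes Qs: "cstar Q = Q" and m: "0 < m"
    and low: "\<And>z. m * (norm z)^2 \<le> norm (cstar z * (scaleR p z + Q * z))"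
  shows "m * norm z \<le> norm (Aop p Q t z)"
proof (cases "z = 0")
  case False
  define zz where "zz = cstar z * z"
  define A where "A = cstar z * (scaleR p z + Q * z)"
  have zzs: "cstar zz = zz" by (simp add: zz_def cstar_mult)
  have As: "cstar A = A"
    by (simp add: A_def cstar_mult cstar_add cstar_scaleR Qs mult.assoc distrib_left distrib_right)
  have Bs: "cstar (scaleR t zz) = scaleR t zz" by (simp add: cstar_scaleR zzs)
  have "cstar z * Aop p Q t z = cscale (complex_of_real p + \<i> * complex_of_real t) zz + cstar z * (Q * z)"
    by (simp add: Aop_def distrib_left mult_cscale_right zz_def)
  also have "\<dots> = A + cscale \<i> (scaleR t zz)"
  proof -
    have 1: "cscale (complex_of_real p + \<i> * complex_of_real t) zz = scaleR p zz + cscale \<i> (scaleR t zz)"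
      by (simp only: cscale_add_left cscale_of_real cscale_cscale[symmetric])
    have 2: "A = scaleR p zz + cstar z * (Q * z)" by (simp add: A_def distrib_left zz_def)
    show ?thesis by (simp only: 1 2 add_ac)
  qed
  finally have eq: "cstar z * Aop p Q t z = A + cscale \<i> (scaleR t zz)" .
  have "m * (norm z)^2 \<le> norm A" using low A_def by simp
  also have "\<dots> \<le> norm (cstar z * Aop p Q t z)"
    using eq norm_selfadj_le[OF As Bs] by simp
  also have "\<dots> \<le> norm z * norm (Aop p Q t z)"
    using norm_mult_ineq[of "cstar z"] by simp
  finally have "norm z * (m * norm z) \<le> norm z * norm (Aop p Q t z)"
    by (simp add: power2_eq_square mult_ac)
  then show ?thesis using False by simp
qed simp



lemma Aop_large:
  fixes Q :: "'a::cstar_algebra"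
  assumes t: "t \<ge> norm Q + 1"
  shows "\<exists>z. Aop p Q t z = w"
proof -
  define c where "c = complex_of_real p + \<i> * complex_of_real t"
  have tpos: "t > 0" using t norm_ge_zero[of Q] by linarith
  have "t \<le> cmod c"
    using abs_Im_le_cmod[of c] by (simp add: c_def)
  then have c0: "c \<noteq> 0" using tpos by auto
  have "inverse (cmod c) \<le> inverse t" by (rule le_imp_inverse_le[OF \<open>t \<le> cmod c\<close> tpos])
  then have ic: "cmod (inverse c) \<le> 1 / t" by (simp only: norm_inverse inverse_eq_divide[symmetric])
  define F where "F z = cscale (inverse c) (w - Q * z)" for z
  define k where "k = norm Q / t"
  have k: "0 \<le> k" "k < 1" using t tpos by (auto simp: k_def divide_simps)
  have "dist (F x) (F y) \<le> k * dist x y" for x y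
  proof -
    have "F x - F y = cscale (inverse c) (Q * (y - x))"
      by (simp add: F_def cscale_diff_right[symmetric] right_diff_distrib)
    then have "dist (F x) (F y) = cmod (inverse c) * norm (Q * (y - x))"
      by (simp add: dist_norm norm_cscale)
    also have "\<dots> \<le> (1/t) * (norm Q * norm (y - x))"
      using mult_mono[OF ic norm_mult_ineq[of Q "y - x"]] tpos by simp
    also have "\<dots> = k * dist x y" by (simp add: k_def dist_norm norm_minus_commute)
    finally show ?thesis .
  qed
  then obtain z where "F z = z" using banach_fix_type[OF k] by blast
  then have "cscale c z = w - Q * z"
    using c0 by (metis F_def cscale_cscale right_inverse cscale_one)
  then have "Aop p Q t z = w" by (simp add: Aop_def c_def algebra_simps)
  then show ?thesis by blast
qed

lemma Aop_step:
  fixes Q :: "'a::cstar_algebra"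
  assumes below: "\<And>t z. m * norm z \<le> norm (Aop p Q t z)" and m: "0 < m"
    and s0: "\<And>w. \<exists>z. Aop p Q t0 z = w"
    and tt: "\<bar>t - t0\<bar> \<le> m / 2"
  shows "\<exists>z. Aop p Q t z = w"
proof -
  define G where "G u = (SOME z. Aop p Q t0 z = u)" for u
  have G: "Aop p Q t0 (G u) = u" for u
    unfolding G_def using s0 by (rule someI_ex)
  have Gl: "m * norm (G u - G v) \<le> norm (u - v)" for u v
    using below[where t=t0 and z="G u - G v"] by (simp add: Aop_diff[symmetric] G)
  define d where "d = \<i> * complex_of_real (t - t0)"
  define F where "F z = G (w - cscale d z)" for z
  define k :: real where "k = 1/2"
  have nd: "cmod (complex_of_real t - complex_of_real t0) = \<bar>t - t0\<bar>"
    by (metis norm_of_real of_real_diff)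
  have "dist (F x) (F y) \<le> k * dist x y" for x y
  proof -
    have "m * dist (F x) (F y) \<le> norm (cscale d (y - x))"
      using Gl[of "w - cscale d x" "w - cscale d y"]
      by (simp add: F_def dist_norm cscale_diff_right)
    also have "\<dots> = \<bar>t - t0\<bar> * dist x y"
      using nd by (simp add: norm_cscale d_def dist_norm norm_minus_commute norm_mult)
    also have "\<dots> \<le> (m/2) * dist x y" using tt by (intro mult_right_mono) auto
    finally show ?thesis using m by (simp add: k_def)
  qed
  then obtain z where zf: "F z = z" using banach_fix_type[of k F] by (auto simp: k_def)
  have "Aop p Q t0 z = w - cscale d z" using G[of "w - cscale d z"] zf by (simp add: F_def)
  moreover have "Aop p Q t z = Aop p Q t0 z + cscale d z"
    by (simp add: Aop_def d_def cscale_add_left[symmetric] algebra_simps)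
  ultimately show ?thesis by auto
qed

lemma surj_lemma:
  fixes Q :: "'a::cstar_algebra"
  assumes Qs: "cstar Q = Q" and m: "0 < m"
    and low: "\<And>z. m * (norm z)^2 \<le> norm (cstar z * (scaleR p z + Q * z))"
  shows "\<exists>z. scaleR p z + Q * z = w"
proof -
  have below: "\<And>t z. m * norm z \<le> norm (Aop p Q t z)"
    using Aop_below[OF Qs m low] by blast
  define h where "h = m / 2"
  obtain N :: nat where N: "norm Q + 1 \<le> real N * h"
  proof -
    have "0 < h" using m by (simp add: h_def)
    then obtain N :: nat where "norm Q + 1 < real N * h" using reals_Archimedean3 by blast
    then show ?thesis using that by (meson less_imp_le)
  qed
  have "\<forall>w. \<exists>z. Aop p Q ((real N - real n) * h) z = w" for n
  proof (induction n)
    case 0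
    show ?case using Aop_large[OF N] by auto
  next
    case (Suc n)
    show ?case
    proof
      fix w
      show "\<exists>z. Aop p Q ((real N - real (Suc n)) * h) z = w"
      proof (rule Aop_step[OF below m Suc.IH[rule_format]])
        have e: "(real N - real (Suc n)) * h - (real N - real n) * h = - h"
          by (simp add: algebra_simps)
        show "\<bar>(real N - real (Suc n)) * h - (real N - real n) * h\<bar> \<le> m / 2"
          using e m by (simp add: h_def)
      qed
    qed
  qed
  from this[of N] obtain z where "Aop p Q 0 z = w" by auto
  then show ?thesis by (auto simp: Aop_def cscale_of_real)
qed



lemma left_qinv:
  fixes y :: "'a::cstar_algebra"
  assumes d: "0 < d" and low: "\<And>z. d * norm z \<le> norm (z - y * z)"
  shows "\<exists>c. c + y - c * y = 0"
proof -
  define k where "k = y + cstar y - cstar y * y"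
  have ks: "cstar k = k" by (simp add: k_def cstar_add cstar_diff cstar_mult add_ac)
  have Qs: "cstar (- k) = - k" by (simp add: cstar_minus ks)
  have "d^2 * (norm z)^2 \<le> norm (cstar z * (scaleR 1 z + (- k) * z))" for z
  proof -
    have e: "cstar z * (scaleR 1 z + (- k) * z) = cstar (z - y * z) * (z - y * z)"
      by (simp add: k_def cstar_diff cstar_mult algebra_simps)
    have "d^2 * (norm z)^2 = (d * norm z)^2" by (simp add: power_mult_distrib)
    also have "\<dots> \<le> (norm (z - y * z))^2"
      using low[of z] d by (intro power_mono) auto
    finally show ?thesis by (simp only: e cstar_identity)
  qed
  then obtain r where r: "scaleR 1 r + (- k) * r = - k"
    using surj_lemma[OF Qs, of "d^2" 1 "- k"] d by auto
  then have "cstar (r - k * r) = - k" by (simp add: cstar_minus ks)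
  then have r': "cstar r - cstar r * k = - k" by (simp add: cstar_diff cstar_mult ks)
  define c where "c = cstar r + cstar y - cstar r * cstar y"
  have "c + y - c * y = cstar r + k - cstar r * k"
    by (simp add: c_def k_def algebra_simps)
  also have "\<dots> = 0" using r' by (simp add: algebra_simps)
  finally show ?thesis by blast
qed

lemma unit_lemma:
  fixes y :: "'a::cstar_algebra"
  assumes d: "0 < d" and low: "\<And>z. d * norm z \<le> norm (y * z)"
  shows "\<exists>e::'a. \<forall>z. e * z = z \<and> z * e = z"
proof -
  define Q where "Q = cstar y * y"
  have Qs: "cstar Q = Q" by (simp add: Q_def cstar_mult)
  have key: "cstar z * (Q * z) = cstar (y * z) * (y * z)" for z
    by (simp add: Q_def cstar_mult mult.assoc)
  have "d^2 * (norm z)^2 \<le> norm (cstar z * (scaleR 0 z + Q * z))" for z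
  proof -
    have "d^2 * (norm z)^2 = (d * norm z)^2" by (simp add: power_mult_distrib)
    also have "\<dots> \<le> (norm (y * z))^2"
      using low[of z] d by (intro power_mono) auto
    finally show ?thesis by (simp add: key cstar_identity)
  qed
  then obtain e where e: "scaleR 0 e + Q * e = Q"
    using surj_lemma[OF Qs, of "d^2" 0 Q] d by auto
  have Qinj: "Q * z = 0 \<Longrightarrow> z = 0" for z
  proof -
    assume "Q * z = 0"
    then have "norm (cstar (y * z) * (y * z)) = 0" by (simp flip: key)
    then have "norm (y * z) = 0" by (simp add: cstar_identity)
    then show "z = 0" using low[of z] d by (simp add: mult_le_0_iff)
  qed
  have le: "e * z = z" for z
  proof -
    have "Q * (e * z - z) = 0" using e by (simp add: right_diff_distrib mult.assoc[symmetric])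
    then have "e * z - z = 0" by (rule Qinj)
    then show ?thesis by simp
  qed
  have ri: "z * cstar e = z" for z
    by (metis cstar_cstar cstar_mult le)
  have "e = cstar e" by (metis le ri)
  then have es: "cstar e = e" by simp
  have "\<forall>z. e * z = z \<and> z * e = z"
  proof
    fix z show "e * z = z \<and> z * e = z" using le[of z] ri[of z] es by simp
  qed
  then show ?thesis by (rule exI[of _ e])
qed



lemma baire_step:
  fixes T :: "'a::banach \<Rightarrow> 'c::banach"
  assumes bl: "bounded_linear T" and cl: "closed (range T)"
  shows "\<exists>n::nat. \<exists>y0\<in>range T. \<exists>e>0. \<forall>y\<in>range T. dist y y0 < e \<longrightarrow> y \<in> closure (T ` cball 0 (real n))"
proof (rule ccontr)
  assume H: "\<not> ?thesis"
  define X where "X = top_of_set (range T)"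
  define G where "G = range (\<lambda>n::nat. range T \<inter> closure (T ` cball 0 (real n)))"
  have cm: "completely_metrizable_space X"
    unfolding X_def
    by (rule completely_metrizable_space_closedin[OF completely_metrizable_space_euclidean])
      (use cl closed_closedin in auto)
  have "X interior_of \<Union>G = {}"
  proof (rule Baire_category_alt)
    show "completely_metrizable_space X \<or> locally_compact_space X \<and> regular_space X"
      using cm by blast
    show "countable G" by (simp add: G_def)
    fix S assume "S \<in> G"
    then obtain n where S: "S = range T \<inter> closure (T ` cball 0 (real n))" by (auto simp: G_def)
    show "closedin X S \<and> X interior_of S = {}"
    proof
      show "closedin X S" unfolding X_def S by (rule closedin_closed_Int) simp
      show "X interior_of S = {}"
      proof (rule ccontr)
        assume "X interior_of S \<noteq> {}"
        then obtain y0 U where U: "openin X U" "y0 \<in> U" "U \<subseteq> S"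
          by (auto simp: interior_of_def)
        then obtain V where V: "open V" "U = range T \<inter> V"
          by (auto simp: X_def openin_open)
        then obtain e where e: "e > 0" "ball y0 e \<subseteq> V"
          using U(2) by (meson IntD2 openE)
        have "\<forall>y\<in>range T. dist y y0 < e \<longrightarrow> y \<in> closure (T ` cball 0 (real n))"
        proof (intro ballI impI)
          fix y assume y: "y \<in> range T" "dist y y0 < e"
          then have "y \<in> ball y0 e" by (simp add: dist_commute)
          then have "y \<in> U" using e V y by auto
          then show "y \<in> closure (T ` cball 0 (real n))" using U S by auto
        qed
        moreover have "y0 \<in> range T" using U S by auto
        ultimately show False using H e(1) by blast
      qed
    qed
  qed
  moreover have "\<Union>G = range T"
  proof
    show "\<Union>G \<subseteq> range T" by (auto simp: G_def)
    show "range T \<subseteq> \<Union>G"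
    proof
      fix y assume "y \<in> range T"
      then obtain x where x: "y = T x" by auto
      have "norm x \<le> real (nat \<lceil>norm x\<rceil>)" by linarith
      then have "y \<in> T ` cball 0 (real (nat \<lceil>norm x\<rceil>))" using x by auto
      then show "y \<in> \<Union>G" unfolding G_def using x closure_subset by fast
    qed
  qed
  moreover have "X interior_of range T = range T"
    using interior_of_topspace[of X] by (simp add: X_def)
  ultimately have "range T = {}" by simp
  then show False by simp
qed

lemma approx_step:
  fixes T :: "'a::banach \<Rightarrow> 'c::banach"
  assumes bl: "bounded_linear T" and cl: "closed (range T)"
  shows "\<exists>M>0. \<forall>w\<in>range T. \<forall>\<delta>>0. \<exists>x. norm x \<le> M * norm w \<and> norm (w - T x) < \<delta>"
proof -
  interpret T: bounded_linear T by (rule bl)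
  obtain n :: nat and y0 e where e: "e > 0" and y0: "y0 \<in> range T"
    and H: "\<And>y. y\<in>range T \<Longrightarrow> dist y y0 < e \<Longrightarrow> y \<in> closure (T ` cball 0 (real n))"
    using baire_step[OF bl cl] by blast
  have small: "\<exists>x. norm x \<le> 2 * real n \<and> norm (w - T x) < \<delta>"
    if w: "w \<in> range T" "norm w < e" and d: "\<delta> > 0" for w \<delta>
  proof -
    have "y0 + w \<in> range T" using y0 w by (auto simp flip: T.add)
    then have c1: "y0 + w \<in> closure (T ` cball 0 (real n))"
      using H w by (simp add: dist_norm)
    have c2: "y0 \<in> closure (T ` cball 0 (real n))"
      using H y0 e by simp
    have "\<exists>y\<in>T ` cball 0 (real n). dist y (y0 + w) < \<delta>/2"
      using c1[unfolded closure_approachable, rule_format, of "\<delta>/2"] d by simp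
    then obtain u where u: "u \<in> cball 0 (real n)" "dist (T u) (y0 + w) < \<delta>/2" by blast
    have "\<exists>y\<in>T ` cball 0 (real n). dist y y0 < \<delta>/2"
      using c2[unfolded closure_approachable, rule_format, of "\<delta>/2"] d by simp
    then obtain v where v: "v \<in> cball 0 (real n)" "dist (T v) y0 < \<delta>/2" by blast
    have "norm (u - v) \<le> 2 * real n"
      using u v norm_triangle_ineq4[of u v] by simp
    moreover have "norm (w - T (u - v)) < \<delta>"
    proof -
      have "w - T (u - v) = (y0 + w - T u) - (y0 - T v)" by (simp add: T.diff)
      then have "norm (w - T (u - v)) \<le> norm (y0 + w - T u) + norm (y0 - T v)"
        by (metis norm_triangle_ineq4)
      then show ?thesis using u v by (simp add: dist_norm norm_minus_commute)
    qed
    ultimately show ?thesis by blast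
  qed
  define M where "M = (4 * real n + 1) / e"
  have M: "M > 0" using e by (simp add: M_def)
  have "\<exists>x. norm x \<le> M * norm w \<and> norm (w - T x) < \<delta>" if w: "w \<in> range T" and d: "\<delta> > 0" for w \<delta>
  proof (cases "w = 0")
    case True then show ?thesis using d by (intro exI[of _ 0]) simp
  next
    case False
    define s where "s = e / (2 * norm w)"
    have s: "s > 0" using False e by (simp add: s_def)
    have "scaleR s w \<in> range T" using w by (auto simp flip: T.scaleR)
    moreover have "norm (scaleR s w) < e" using False e by (simp add: s_def)
    ultimately obtain x where x: "norm x \<le> 2 * real n" "norm (scaleR s w - T x) < s * \<delta>"
      using small[of "scaleR s w" "s * \<delta>"] s d by auto
    have "norm (scaleR (1/s) x) \<le> (1/s) * (2 * real n)"
      using x s by (simp add: divide_right_mono)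
    also have "\<dots> = (4 * real n) / e * norm w" using False e by (simp add: s_def field_simps)
    also have "\<dots> \<le> M * norm w"
      unfolding M_def by (intro mult_right_mono divide_right_mono) (use e in auto)
    finally have 1: "norm (scaleR (1/s) x) \<le> M * norm w" .
    have "w - T (scaleR (1/s) x) = scaleR (1/s) (scaleR s w - T x)"
      using s by (simp add: T.scaleR scaleR_diff_right)
    then have "norm (w - T (scaleR (1/s) x)) = (1/s) * norm (scaleR s w - T x)"
      using s by simp
    also have "\<dots> < (1/s) * (s * \<delta>)" using x s by (intro mult_strict_left_mono) auto
    also have "\<dots> = \<delta>" using s by simp
    finally show ?thesis using 1 by blast
  qed
  then show ?thesis using M by blast
qed



lemma bounded_below:
  fixes T :: "'a::banach \<Rightarrow> 'c::banach"
  assumes bl: "bounded_linear T" and inj: "inj T" and cl: "closed (range T)"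
  shows "\<exists>d>0. \<forall>x. d * norm x \<le> norm (T x)"
proof -
  interpret T: bounded_linear T by (rule bl)
  obtain M where M: "M > 0"
    and A: "\<And>w \<delta>. w \<in> range T \<Longrightarrow> \<delta> > 0 \<Longrightarrow> \<exists>x. norm x \<le> M * norm w \<and> norm (w - T x) < \<delta>"
    using approx_step[OF bl cl] by blast
  define chi where "chi u \<delta> = (SOME x. norm x \<le> M * norm u \<and> norm (u - T x) < \<delta>)" for u \<delta>
  have chi: "norm (chi u \<delta>) \<le> M * norm u \<and> norm (u - T (chi u \<delta>)) < \<delta>"
    if "u \<in> range T" "\<delta> > 0" for u \<delta>
    unfolding chi_def by (rule someI_ex) (use A that in blast)
  have main: "norm x0 \<le> 2 * M * norm (T x0)" for x0
  proof (cases "T x0 = 0")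
    case True
    then have "x0 = 0" using inj T.zero by (metis injD)
    then show ?thesis by simp
  next
    case False
    define w where "w = T x0"
    define \<eta> where "\<eta> = norm w"
    have eta: "\<eta> > 0" using False by (simp add: \<eta>_def w_def)
    define r where "r = rec_nat w (\<lambda>k rk. rk - T (chi rk (\<eta> * (1/2)^(Suc k))))"
    have r0: "r 0 = w" by (simp add: r_def)
    have rS: "r (Suc k) = r k - T (chi (r k) (\<eta> * (1/2)^(Suc k)))" for k
      by (simp add: r_def)
    define xs where "xs k = chi (r k) (\<eta> * (1/2)^(Suc k))" for k
    have rprop: "r k \<in> range T \<and> norm (r k) \<le> \<eta> * (1/2)^k" for k
    proof (induction k)
      case 0 show ?case by (simp add: r0 w_def \<eta>_def)
    next
      case (Suc k)
      then have "norm (r k - T (xs k)) < \<eta> * (1/2)^(Suc k)"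
        using chi[of "r k" "\<eta> * (1/2)^(Suc k)"] eta by (simp add: xs_def)
      moreover have "r k - T (xs k) \<in> range T" using Suc by (auto simp flip: T.diff)
      moreover have eqS: "r (Suc k) = r k - T (xs k)" by (simp only: rS xs_def)
      ultimately show ?case by (simp only: eqS) (blast intro: less_imp_le)
    qed
    have xsb: "norm (xs k) \<le> M * \<eta> * (1/2)^k" for k
    proof -
      have "norm (xs k) \<le> M * norm (r k)"
        using chi[of "r k" "\<eta> * (1/2)^(Suc k)"] rprop[of k] eta by (simp add: xs_def)
      also have "\<dots> \<le> M * (\<eta> * (1/2)^k)" using rprop[of k] M by (intro mult_left_mono) auto
      finally show ?thesis by (simp add: mult.assoc)
    qed
    have gs: "summable (\<lambda>k. M * \<eta> * (1/2::real)^k)"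
      by (intro summable_mult summable_geometric) simp
    have sn: "summable (\<lambda>k. norm (xs k))"
      by (rule summable_comparison_test[OF _ gs]) (use xsb in auto)
    then have sx: "summable xs" by (rule summable_norm_cancel)
    have "norm (suminf xs) \<le> (\<Sum>k. norm (xs k))" by (rule summable_norm[OF sn])
    also have "\<dots> \<le> (\<Sum>k. M * \<eta> * (1/2::real)^k)"
      by (rule suminf_le[OF _ sn gs]) (use xsb in auto)
    also have "\<dots> = 2 * M * \<eta>"
      using suminf_geometric[of "1/2::real"] by (simp add: suminf_mult)
    finally have nb: "norm (suminf xs) \<le> 2 * M * \<eta>" .
    have partial: "(\<Sum>k<n. T (xs k)) = w - r n" for n
      by (induction n) (simp_all add: r0 rS xs_def)
    have rlim: "r \<longlonglongrightarrow> 0"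
    proof (rule Lim_null_comparison)
      show "\<forall>\<^sub>F n in sequentially. norm (r n) \<le> \<eta> * (1/2)^n" using rprop by simp
      show "(\<lambda>n. \<eta> * (1/2::real)^n) \<longlonglongrightarrow> 0"
        by (intro tendsto_mult_right_zero LIMSEQ_power_zero) simp
    qed
    have "(\<lambda>k. T (xs k)) sums w"
      unfolding sums_def partial using tendsto_diff[OF tendsto_const rlim, of w] by simp
    then have "T (suminf xs) = w"
      using T.suminf[OF sx] sums_unique by metis
    then have "suminf xs = x0" using inj by (simp add: w_def inj_eq)
    then show ?thesis using nb by (simp add: \<eta>_def w_def)
  qed
  show ?thesis
  proof (intro exI[of _ "1 / (2 * M)"] conjI allI)
    show "0 < 1 / (2 * M)" using M by simp
    fix x show "1 / (2 * M) * norm x \<le> norm (T x)"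
      using main[of x] M by (simp add: field_simps)
  qed
qed



lemma bounded_from_cont:
  fixes f :: "'x::real_normed_vector \<Rightarrow> 'y::real_normed_vector"
  assumes cont: "continuous_on D f" and D0: "0 \<in> D" and f0: "f 0 = 0"
    and Ds: "\<And>S r. S \<in> D \<Longrightarrow> scaleR r S \<in> D"
    and fs: "\<And>S r. S \<in> D \<Longrightarrow> f (scaleR r S) = scaleR r (f S)"
  shows "\<exists>K>0. \<forall>S\<in>D. norm (f S) \<le> K * norm S"
proof -
  obtain \<delta> where d: "\<delta> > 0" and H: "\<And>x'. x' \<in> D \<Longrightarrow> dist x' 0 < \<delta> \<Longrightarrow> dist (f x') (f 0) < 1"
    using cont D0 unfolding continuous_on_iff by (meson zero_less_one)
  have "norm (f S) \<le> (2/\<delta>) * norm S" if S: "S \<in> D" for S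
  proof (cases "S = 0")
    case True then show ?thesis using f0 by simp
  next
    case False
    define r where "r = \<delta> / (2 * norm S)"
    have r: "r > 0" using False d by (simp add: r_def)
    have "norm (scaleR r S) < \<delta>" using False d by (simp add: r_def)
    then have "norm (f (scaleR r S)) < 1" using H[of "scaleR r S"] Ds[OF S] f0 by simp
    then have "r * norm (f S) < 1" using fs[OF S] r by simp
    then have "norm (f S) < 1 / r" using r by (simp add: field_simps)
    also have "1 / r = (2/\<delta>) * norm S" using d False by (simp add: r_def)
    finally show ?thesis by simp
  qed
  then show ?thesis using d by (intro exI[of _ "2/\<delta>"]) auto
qed

lemma op_lower:
  fixes S R :: "'a::real_normed_vector \<Rightarrow>\<^sub>L 'a"
  assumes d: "d > 0" and low: "\<And>v. d * norm v \<le> norm (g v)" and eq: "\<And>x. g (S x) = R x"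
  shows "d * norm S \<le> norm R"
proof -
  have "norm S \<le> norm R / d"
  proof (rule norm_blinfun_bound)
    show "0 \<le> norm R / d" using d by simp
    fix x
    have "d * norm (S x) \<le> norm (R x)" using low[of "S x"] eq by simp
    also have "\<dots> \<le> norm R * norm x" by (rule norm_blinfun)
    finally show "norm (S x) \<le> norm R / d * norm x" using d by (simp add: field_simps)
  qed
  then show ?thesis using d by (simp add: field_simps)
qed

locale iso_setting =
  fixes A :: "('a::complex_banach \<Rightarrow>\<^sub>L 'a) set" and \<phi> :: "('a \<Rightarrow>\<^sub>L 'a) \<Rightarrow> 'b::cstar_algebra"
  assumes sub: "subalgebra_BX A" and iso: "bicont_alg_iso A \<phi>"
begin

lemma A0: "0 \<in> A" using sub by (simp add: subalgebra_BX_def)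
lemma A_add: "S \<in> A \<Longrightarrow> T \<in> A \<Longrightarrow> S + T \<in> A" using sub by (simp add: subalgebra_BX_def)
lemma A_comp: "S \<in> A \<Longrightarrow> T \<in> A \<Longrightarrow> S o\<^sub>L T \<in> A" using sub by (simp add: subalgebra_BX_def)
lemma A_cs: "T \<in> A \<Longrightarrow> \<exists>S\<in>A. \<forall>x. S x = cscale c (T x)" using sub by (simp add: subalgebra_BX_def)

lemma A_scaleR: assumes "S \<in> A" shows "scaleR r S \<in> A"
proof -
  obtain S' where "S' \<in> A" "\<forall>x. S' x = cscale (complex_of_real r) (S x)" using A_cs[OF assms] by blast
  moreover then have "S' = scaleR r S" by (intro blinfun_eqI) (simp add: cscale_of_real scaleR_blinfun.rep_eq)
  ultimately show ?thesis by simp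
qed

lemma A_neg: "S \<in> A \<Longrightarrow> - S \<in> A" using A_scaleR[of S "-1"] by simp
lemma A_diff: "S \<in> A \<Longrightarrow> T \<in> A \<Longrightarrow> S - T \<in> A" using A_add[of S "- T"] A_neg[of T] by (simp only: diff_conv_add_uminus)

lemma bij: "bij_betw \<phi> A UNIV" using iso by (simp add: bicont_alg_iso_def)
lemma inj: "inj_on \<phi> A" using bij by (simp add: bij_betw_def)
lemma phi_add: "S \<in> A \<Longrightarrow> T \<in> A \<Longrightarrow> \<phi> (S + T) = \<phi> S + \<phi> T" using iso by (simp add: bicont_alg_iso_def)
lemma phi_comp: "S \<in> A \<Longrightarrow> T \<in> A \<Longrightarrow> \<phi> (S o\<^sub>L T) = \<phi> S * \<phi> T" using iso by (simp add: bicont_alg_iso_def)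
lemma phi_cs: "S \<in> A \<Longrightarrow> T \<in> A \<Longrightarrow> (\<forall>x. S x = cscale c (T x)) \<Longrightarrow> \<phi> S = cscale c (\<phi> T)"
  using iso by (simp add: bicont_alg_iso_def)
lemma phi_cont: "continuous_on A \<phi>" using iso by (simp add: bicont_alg_iso_def)
lemma psi_cont: "continuous_on UNIV (inv_into A \<phi>)" using iso by (simp add: bicont_alg_iso_def)

lemma phi0: "\<phi> 0 = 0" using phi_add[OF A0 A0] by simp
lemma phi_neg: "S \<in> A \<Longrightarrow> \<phi> (- S) = - \<phi> S"
proof -
  assume S: "S \<in> A"
  have "\<phi> S + \<phi> (- S) = 0" using phi_add[OF S A_neg[OF S]] phi0 by simp
  then show ?thesis by (simp add: eq_neg_iff_add_eq_0 add.commute)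
qed
lemma phi_diff: "S \<in> A \<Longrightarrow> T \<in> A \<Longrightarrow> \<phi> (S - T) = \<phi> S - \<phi> T"
  using phi_add[of S "- T"] A_neg[of T] phi_neg[of T] by (simp only: diff_conv_add_uminus)
lemma phi_scaleR: "S \<in> A \<Longrightarrow> \<phi> (scaleR r S) = scaleR r (\<phi> S)"
  using phi_cs[of "scaleR r S" S "complex_of_real r"] A_scaleR by (simp add: cscale_of_real scaleR_blinfun.rep_eq)

definition "\<psi> = inv_into A \<phi>"
lemma psi_in: "\<psi> z \<in> A" using bij unfolding \<psi>_def by (simp add: bij_betw_def inv_into_into)
lemma phi_psi[simp]: "\<phi> (\<psi> z) = z" using bij unfolding \<psi>_def by (simp add: bij_betw_def f_inv_into_f)
lemma psi_phi: "S \<in> A \<Longrightarrow> \<psi> (\<phi> S) = S" using inj unfolding \<psi>_def by simp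

lemma phi_eqD: "S \<in> A \<Longrightarrow> T \<in> A \<Longrightarrow> \<phi> S = \<phi> T \<Longrightarrow> S = T"
  using inj by (meson inj_onD)

lemma phi_bound: "\<exists>K>0. \<forall>S\<in>A. norm (\<phi> S) \<le> K * norm S"
  by (rule bounded_from_cont[OF phi_cont A0 phi0 A_scaleR phi_scaleR])

lemma psi_bound: "\<exists>K>0. \<forall>z. norm (\<psi> z) \<le> K * norm z"
proof -
  have p0: "\<psi> 0 = 0" using phi_eqD[OF psi_in A0] phi0 by simp
  have ps: "\<psi> (scaleR r z) = scaleR r (\<psi> z)" for r z
    by (rule phi_eqD[OF psi_in A_scaleR[OF psi_in]]) (simp add: phi_scaleR[OF psi_in])
  show ?thesis using bounded_from_cont[of UNIV \<psi>] psi_cont p0 ps by (auto simp: \<psi>_def)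
qed

lemma transfer_lower:
  assumes d: "d > 0" and F: "\<And>S. S \<in> A \<Longrightarrow> F S \<in> A"
    and low: "\<And>S. S \<in> A \<Longrightarrow> d * norm S \<le> norm (F S)"
  shows "\<exists>d'>0. \<forall>z. d' * norm z \<le> norm (\<phi> (F (\<psi> z)))"
proof -
  obtain K1 where K1: "K1 > 0" "\<And>S. S\<in>A \<Longrightarrow> norm (\<phi> S) \<le> K1 * norm S" using phi_bound by blast
  obtain K2 where K2: "K2 > 0" "\<And>z. norm (\<psi> z) \<le> K2 * norm z" using psi_bound by blast
  have "d / (K1 * K2) * norm z \<le> norm (\<phi> (F (\<psi> z)))" for z
  proof -
    have "d * norm z \<le> d * (K1 * norm (\<psi> z))"
      using K1(2)[OF psi_in, of z] d by simp
    also have "\<dots> = K1 * (d * norm (\<psi> z))" by simp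
    also have "\<dots> \<le> K1 * norm (F (\<psi> z))" using low[OF psi_in] K1 by simp
    also have "norm (F (\<psi> z)) = norm (\<psi> (\<phi> (F (\<psi> z))))" using psi_phi[OF F[OF psi_in]] by simp
    also have "\<dots> \<le> K2 * norm (\<phi> (F (\<psi> z)))" by (rule K2(2))
    finally have "d * norm z \<le> K1 * (K2 * norm (\<phi> (F (\<psi> z))))" using K1 by simp
    then show ?thesis using K1 K2 by (simp add: field_simps)
  qed
  then show ?thesis using d K1 K2 by (intro exI[of _ "d / (K1 * K2)"]) auto
qed

lemma main_surj:
  assumes qdf: "quasi_directly_finite TYPE('b)" and b: "b \<in> A"
    and d: "d > 0" and low: "\<And>x. d * norm x \<le> norm (x - b x)"
  shows "surj (\<lambda>x. x - b x)"
proof -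
  define y where "y = \<phi> b"
  define F :: "('a \<Rightarrow>\<^sub>L 'a) \<Rightarrow> ('a \<Rightarrow>\<^sub>L 'a)" where "F S = S - (b o\<^sub>L S)" for S
  have F: "S \<in> A \<Longrightarrow> F S \<in> A" for S using A_diff A_comp b by (simp add: F_def)
  have lowF: "S \<in> A \<Longrightarrow> d * norm S \<le> norm (F S)" for S
    by (rule op_lower[where g="\<lambda>v. v - b v", OF d low]) (simp add: F_def blinfun.diff_left)
  obtain d' where d': "d' > 0" "\<And>z. d' * norm z \<le> norm (\<phi> (F (\<psi> z)))"
    using transfer_lower[OF d F lowF] by blast
  have "\<phi> (F (\<psi> z)) = z - y * z" for z
    using phi_diff[OF psi_in A_comp[OF b psi_in]] phi_comp[OF b psi_in] by (simp add: F_def y_def)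
  then obtain c where c: "c + y - c * y = 0"
    using left_qinv[of d' y] d' by auto
  then have c2: "y + c - y * c = 0"
    using qdf unfolding quasi_directly_finite_def qdiamond_def by blast
  define c' where "c' = \<psi> c"
  have c'A: "c' \<in> A" by (simp add: c'_def psi_in)
  define U where "U = b + c' - (b o\<^sub>L c')"
  have UA: "U \<in> A" using b c'A by (simp add: U_def A_add A_diff A_comp)
  have "\<phi> U = y + c - y * c"
    using b c'A by (simp add: U_def phi_diff phi_add phi_comp A_add A_comp y_def c'_def)
  then have "\<phi> U = \<phi> 0" using c2 phi0 by simp
  then have U0: "U = 0" using phi_eqD[OF UA A0] by simp
  show ?thesis
  proof (rule surjI)
    fix x
    have "U x = 0" using U0 by simp
    then have "b x + c' x - b (c' x) = 0" by (simp add: U_def blinfun.diff_left blinfun.add_left)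
    then show "(x - c' x) - b (x - c' x) = x" by (simp add: blinfun.diff_right algebra_simps)
  qed
qed

lemma id_in_A:
  assumes a: "a \<in> A" and d: "d > 0" and low: "\<And>x. d * norm x \<le> norm (a x)"
  shows "id_blinfun \<in> A"
proof -
  define y where "y = \<phi> a"
  have F: "S \<in> A \<Longrightarrow> a o\<^sub>L S \<in> A" for S using A_comp a by simp
  have lowF: "S \<in> A \<Longrightarrow> d * norm S \<le> norm (a o\<^sub>L S)" for S
    by (rule op_lower[where g="blinfun_apply a", OF d low]) simp
  obtain d' where d': "d' > 0" "\<And>z. d' * norm z \<le> norm (\<phi> (a o\<^sub>L (\<psi> z)))"
    using transfer_lower[OF d F lowF] by blast
  then have "d' * norm z \<le> norm (y * z)" for z
    using phi_comp[OF a psi_in] d'(2)[of z] by (simp add: y_def)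
  then have "\<exists>e::'b. \<forall>z. e * z = z \<and> z * e = z" using unit_lemma[of d' y] d'(1) by blast
  then obtain e :: 'b where e: "\<And>z. e * z = z \<and> z * e = z" by blast
  define E where "E = \<psi> e"
  have EA: "E \<in> A" by (simp add: E_def psi_in)
  have "\<phi> (a o\<^sub>L E) = \<phi> a" using phi_comp[OF a EA] e by (simp add: E_def y_def)
  then have aE: "a o\<^sub>L E = a" using phi_eqD[OF A_comp[OF a EA] a] by simp
  have "E = id_blinfun"
  proof (rule blinfun_eqI)
    fix x
    have "a (E x - x) = 0" using aE by (metis blinfun.diff_right blinfun_apply_blinfun_compose diff_self)
    then have "d * norm (E x - x) \<le> 0" using low[of "E x - x"] by simp
    then show "E x = id_blinfun x" using d by (simp add: mult_le_0_iff)
  qed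
  then show ?thesis using EA by simp
qed

end



lemma cscale_bl: "bounded_linear (\<lambda>x::'a::complex_normed_vector. cscale c x)"
proof (rule bounded_linear_intro[of _ "cmod c"])
  show "cscale c (x + y) = cscale c x + cscale c y" for x y by (rule cscale_add_right)
  show "cscale c (scaleR r x) = scaleR r (cscale c x)" for r x
    by (simp add: scaleR_cscale cscale_cscale mult.commute)
  show "norm (cscale c x) \<le> norm x * cmod c" for x by (simp add: norm_cscale mult.commute)
qed

theorem theorem1p1:
  fixes A :: "('a::complex_banach \<Rightarrow>\<^sub>L 'a) set"
    and \<phi> :: "('a \<Rightarrow>\<^sub>L 'a) \<Rightarrow> 'b::cstar_algebra"
  assumes "subalgebra_BX A"
    and "closed A"
    and "bicont_alg_iso A \<phi>"
    and "quasi_directly_finite TYPE('b)"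
  shows "surjunctive A"
proof -
  interpret iso_setting A \<phi> using assms(1,3) by unfold_locales
  show ?thesis unfolding surjunctive_def residual_spectrum_def
  proof (intro ballI equals0I)
    fix a l assume a: "a \<in> A"
    define f where "f = (\<lambda>x. a x - cscale l x)"
    assume "l \<in> {l. inj (\<lambda>x. a x - cscale l x) \<and> closed (range (\<lambda>x. a x - cscale l x))
                   \<and> range (\<lambda>x. a x - cscale l x) \<noteq> UNIV}"
    then have fi: "inj f" and fc: "closed (range f)" and fs: "range f \<noteq> UNIV"
      by (simp_all add: f_def)
    show False
    proof (cases "l = 0")
      case True
      then have fa: "f = blinfun_apply a" by (auto simp: f_def)
      obtain d where d: "d > 0" "\<And>x. d * norm x \<le> norm (a x)"
        using bounded_below[of "blinfun_apply a"] fi fc fa blinfun.bounded_linear_right by metis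
      have idA: "id_blinfun \<in> A" using id_in_A[OF a d] .
      define b where "b = id_blinfun - a"
      have bA: "b \<in> A" using A_diff[OF idA a] by (simp add: b_def)
      have eq: "(\<lambda>x. x - b x) = blinfun_apply a"
        by (auto simp: b_def blinfun.diff_left)
      have "surj (\<lambda>x. x - b x)"
      proof (rule main_surj[OF assms(4) bA d(1)])
        fix x
        have "x - b x = a x" by (simp add: b_def blinfun.diff_left)
        then show "d * norm x \<le> norm (x - b x)" using d(2)[of x] by simp
      qed
      then have "surj (blinfun_apply a)" by (simp only: eq)
      then show False using fs fa by simp
    next
      case False
      obtain b where bA: "b \<in> A" and bx: "\<And>x. b x = cscale (1/l) (a x)" using A_cs[OF a] by blast
      define g where "g x = x - b x" for x
      have gf: "g x = cscale (- 1/l) (f x)" for x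
        using False by (simp add: g_def f_def bx cscale_diff_right cscale_cscale cscale_minus_left cscale_one)
      have fg: "f x = cscale (- l) (g x)" for x
        using False by (simp add: gf cscale_cscale cscale_one)
      have gi: "inj g"
      proof (rule injI)
        fix x y assume "g x = g y"
        then have "f x = f y" by (simp add: fg)
        then show "x = y" using fi by (simp add: inj_eq)
      qed
      have rg: "range g = (\<lambda>v. cscale (- l) v) -` range f"
      proof
        show "range g \<subseteq> (\<lambda>v. cscale (- l) v) -` range f" using fg by auto
        show "(\<lambda>v. cscale (- l) v) -` range f \<subseteq> range g"
        proof
          fix v assume "v \<in> (\<lambda>v. cscale (- l) v) -` range f"
          then obtain x where "cscale (- l) v = f x" by auto
          then have "cscale (- 1/l) (cscale (- l) v) = g x" by (simp add: gf)
          then show "v \<in> range g" using False by (simp add: cscale_cscale cscale_one)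
        qed
      qed
      have gc: "closed (range g)"
        unfolding rg
        by (rule continuous_closed_vimage[OF fc])
          (simp add: linear_continuous_at bounded_linear.linear cscale_bl)
      have gbl: "bounded_linear g"
        unfolding g_def by (intro bounded_linear_sub bounded_linear_ident blinfun.bounded_linear_right)
      obtain d where d: "d > 0" "\<And>x. d * norm x \<le> norm (g x)"
        using bounded_below[OF gbl gi gc] by blast
      have "surj g" unfolding g_def
        by (rule main_surj[OF assms(4) bA d(1)]) (use d(2) in \<open>simp add: g_def\<close>)
      have "surj f"
      proof (rule surjI)
        fix v
        obtain x where x: "cscale (- 1/l) v = g x" using surjD[OF \<open>surj g\<close>] by blast
        show "f (SOME x. cscale (- 1/l) v = g x) = v"
        proof -
          have "cscale (- 1/l) v = g (SOME x. cscale (- 1/l) v = g x)" using x by (rule someI)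
          then have "f (SOME x. cscale (- 1/l) v = g x) = cscale (- l) (cscale (- 1/l) v)"
            by (simp add: fg)
          also have "\<dots> = v" using False by (simp add: cscale_cscale cscale_one)
          finally show ?thesis .
        qed
      qed
      then show False using fs by simp
    qed
  qed
qed

end
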